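(* Let $f:2^N\to\mathbb R_{\ge0}$ be monotone submodular, $|N|=n$, $1\le k\le n$, and $S^\star\in\arg\max_{|T|\le k}f(T)$. Given at least $n\log n$ samples, each a uniformly random subset of $N$ of size $k$ (drawn independently), the sample $S$ of largest value satisfies $f(S)\ge f(S^\star)/k$ with high probability (failure probability polynomially small in $n$).
   Context: $f$ monotone: $f(A)\le f(B)$ for $A\subseteq B$; submodular: $f(A\cup\{e\})-f(A)\ge f(B\cup\{e\})-f(B)$ for $A\subseteq B$. *)

theory Defs
  imports "HOL-Probability.Probability"
begin

definition monotone_setfun :: "'a set \<Rightarrow> ('a set \<Rightarrow> real) \<Rightarrow> bool" where
  "monotone_setfun N f \<longleftrightarrow> (\<forall>A B. A \<subseteq> B \<and> B \<subseteq> N \<longrightarrow> f A \<le> f B)"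

definition submodular_setfun :: "'a set \<Rightarrow> ('a set \<Rightarrow> real) \<Rightarrow> bool" where
  "submodular_setfun N f \<longleftrightarrow>
     (\<forall>A B e. A \<subseteq> B \<and> B \<subseteq> N \<and> e \<in> N \<longrightarrow>
        f (A \<union> {e}) - f A \<ge> f (B \<union> {e}) - f B)"

definition ksubsets :: "'a set \<Rightarrow> nat \<Rightarrow> 'a set set" where
  "ksubsets N k = {T. T \<subseteq> N \<and> card T = k}"

definition samples :: "'a set \<Rightarrow> nat \<Rightarrow> nat \<Rightarrow> 'a set list pmf" where
  "samples N k m = replicate_pmf m (pmf_of_set (ksubsets N k))"

definition best_value :: "('a set \<Rightarrow> real) \<Rightarrow> 'a set list \<Rightarrow> real" where
  "best_value f xs = Max (f ` set xs)"

end

theory Submission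
  imports Defs
begin

lemma rep_all:
  "emeasure (measure_pmf (replicate_pmf m p)) {xs. \<forall>x\<in>set xs. x \<in> B} = emeasure (measure_pmf p) B ^ m"
proof (induction m)
  case 0 then show ?case by simp
next
  case (Suc m)
  have i: "indicator {xs. \<forall>x\<in>set xs. x \<in> B} (x # xa) = indicator B x * (indicator {xs. \<forall>x\<in>set xs. x \<in> B} xa :: ennreal)" for x xa
    by (auto simp: indicator_def)
  have "(\<integral>\<^sup>+ x. \<integral>\<^sup>+ xa. indicator {xs. \<forall>x\<in>set xs. x \<in> B} (x # xa)  \<partial>measure_pmf (replicate_pmf m p) \<partial>measure_pmf p)
     = (\<integral>\<^sup>+ x. indicator B x * emeasure (measure_pmf p) B ^ m \<partial>measure_pmf p)"
    unfolding i by (simp add: nn_integral_cmult Suc.IH[symmetric])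
  also have "\<dots> = emeasure (measure_pmf p) B * emeasure (measure_pmf p) B ^ m"
    by (simp add: nn_integral_multc)
  finally show ?case by simp
qed

lemma rep_all_measure:
  "measure (measure_pmf (replicate_pmf m p)) {xs. \<forall>x\<in>set xs. x \<in> B} = measure (measure_pmf p) B ^ m"
  using rep_all[of m p B]
  by (simp add: measure_pmf.emeasure_eq_measure ennreal_power)

lemma subadd:
  assumes "finite S" "S \<noteq> {}" "S \<subseteq> N"
    and nn: "\<forall>T. T \<subseteq> N \<longrightarrow> f T \<ge> 0" and sm: "submodular_setfun N f"
  shows "f S \<le> (\<Sum>e\<in>S. f {e})"
  using assms(1-3)
proof (induction S rule: finite_ne_induct)
  case (singleton x) then show ?case by simp
next
  case (insert x F)
  have "f (F \<union> {x}) - f F \<le> f ({} \<union> {x}) - f {}"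
    using sm insert unfolding submodular_setfun_def by blast
  moreover have "f {} \<ge> 0" using nn by auto
  ultimately have "f (insert x F) \<le> f F + f {x}" by simp
  then show ?case using insert by simp
qed

lemma monoD: "monotone_setfun N f \<Longrightarrow> A \<subseteq> B \<Longrightarrow> B \<subseteq> N \<Longrightarrow> f A \<le> f B"
  by (simp add: monotone_setfun_def)

theorem lemma24:
  fixes N :: "'a set" and f :: "'a set \<Rightarrow> real" and k m :: nat and Sstar :: "'a set"
  assumes "finite N"
    and "\<forall>T. T \<subseteq> N \<longrightarrow> f T \<ge> 0"
    and "monotone_setfun N f"
    and "submodular_setfun N f"
    and "1 \<le> k" and "k \<le> card N"
    and "Sstar \<subseteq> N" and "card Sstar \<le> k"
    and "\<forall>T. T \<subseteq> N \<and> card T \<le> k \<longrightarrow> f T \<le> f Sstar"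
    and "real m \<ge> real (card N) * ln (real (card N))"
  shows "measure_pmf.prob (samples N k m)
           {xs. best_value f xs < f Sstar / real k} \<le> 1 / real (card N)"
proof -
  define n where "n = card N"
  have n1: "n \<ge> 1" using assms(5,6) n_def by simp
  show ?thesis
  proof (cases "n = 1")
    case True then show ?thesis using n_def by simp
  next
    case False
    then have n2: "n \<ge> 2" using n1 by simp
    have Nne: "N \<noteq> {}" using n1 n_def by auto
    have lnpos: "ln (real n) > 0" using n2 by simp
    have "real n * ln (real n) > 0" using lnpos n2 by simp
    then have "real m > 0" using assms(10) unfolding n_def by linarith
    then have m0: "m > 0" by simp
    define c where "c = f Sstar / real k"
    have fS0: "f Sstar \<ge> 0" using assms(2,7) by simp
    obtain e where eN: "e \<in> N" and eT: "\<And>T. T \<subseteq> N \<Longrightarrow> e \<in> T \<Longrightarrow> f T \<ge> c"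
    proof (cases "Sstar = {}")
      case True
      obtain e where "e \<in> N" using Nne by auto
      moreover have "f T \<ge> c" if "T \<subseteq> N" for T
      proof -
        have "f T \<ge> f {}" using monoD[OF assms(3), of "{}" T] that by simp
        moreover have "c \<le> f Sstar" unfolding c_def using fS0 assms(5)
          by (simp add: divide_le_eq mult_le_cancel_left1)
        ultimately show ?thesis using True by simp
      qed
      ultimately show ?thesis using that by blast
    next
      case False
      have finS: "finite Sstar" using assms(1,7) finite_subset by blast
      have cS: "card Sstar > 0" using finS False by (simp add: card_gt_0_iff)
      have sub: "f Sstar \<le> (\<Sum>e\<in>Sstar. f {e})"
        using subadd[OF finS False assms(7,2,4)] .
      have "\<exists>e\<in>Sstar. f {e} \<ge> f Sstar / real (card Sstar)"
      proof (rule ccontr)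
        assume "\<not> ?thesis"
        then have "\<forall>e\<in>Sstar. f {e} < f Sstar / real (card Sstar)" by auto
        then have "(\<Sum>e\<in>Sstar. f {e}) < (\<Sum>e\<in>Sstar. f Sstar / real (card Sstar))"
          by (intro sum_strict_mono finS False) auto
        also have "\<dots> = f Sstar" using cS by simp
        finally show False using sub by simp
      qed
      then obtain e where eS: "e \<in> Sstar" and fe: "f {e} \<ge> f Sstar / real (card Sstar)" by blast
      have "f Sstar / real k \<le> f Sstar / real (card Sstar)"
        using fS0 cS assms(8) by (simp add: frac_le)
      then have fe2: "f {e} \<ge> c" using fe c_def by simp
      show ?thesis
      proof (rule that)
        show "e \<in> N" using eS assms(7) by blast
        fix T assume "T \<subseteq> N" "e \<in> T"
        then have "f {e} \<le> f T" using monoD[OF assms(3), of "{e}" T] by simp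
        then show "c \<le> f T" using fe2 by simp
      qed
    qed
    define K where "K = ksubsets N k"
    define p where "p = pmf_of_set K"
    have finK: "finite K" unfolding K_def ksubsets_def using assms(1) by simp
    have cardK: "card K = n choose k"
      unfolding K_def ksubsets_def n_def using n_subsets[OF assms(1)] by simp
    have Kne: "K \<noteq> {}" using cardK assms(6) n_def
      by (metis card.empty zero_less_binomial_iff less_numeral_extra(3))
    define B where "B = {T. e \<notin> T}"
    have KB: "K \<inter> B = {T. T \<subseteq> N - {e} \<and> card T = k}"
      unfolding K_def ksubsets_def B_def by auto
    have cardKB: "card (K \<inter> B) = (n - 1) choose k"
      unfolding KB using n_subsets[of "N - {e}" k] assms(1) eN n_def by simp
    have pB: "measure (measure_pmf p) B = real ((n - 1) choose k) / real (n choose k)"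
      unfolding p_def using measure_pmf_of_set[OF Kne finK, of B] cardK cardKB by simp
    have "real (n - k) * real (n choose k) = real n * real ((n - 1) choose k)"
      using binomial_absorb_comp[of n k] by (metis of_nat_mult)
    moreover have "real (n choose k) > 0" using assms(6) n_def by simp
    ultimately have pB2: "measure (measure_pmf p) B = real (n - k) / real n"
      unfolding pB using n1 by (simp add: field_simps)
    have "real (n - k) / real n \<le> 1 - 1 / real n"
      using assms(5,6) n_def n1 by (simp add: field_simps of_nat_diff)
    then have pB3: "measure (measure_pmf p) B \<le> 1 - 1 / real n" using pB2 by simp
    have sp: "set_pmf (samples N k m) = {xs\<in>lists K. length xs = m}"
      unfolding samples_def set_replicate_pmf p_def K_def[symmetric]
      using set_pmf_of_set[OF Kne finK] by simp
    have sub: "{xs. best_value f xs < c} \<inter> set_pmf (samples N k m) \<subseteq> {xs. \<forall>x\<in>set xs. x \<in> B}"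
    proof clarify
      fix xs x assume bv: "best_value f xs < c" and xs: "xs \<in> set_pmf (samples N k m)"
        and x: "x \<in> set xs"
      have fx: "f x \<le> best_value f xs" unfolding best_value_def using x by simp
      have xN: "x \<subseteq> N" using xs x sp unfolding K_def ksubsets_def by auto
      have "e \<notin> x"
      proof
        assume "e \<in> x"
        then have "c \<le> f x" using eT[OF xN] by simp
        then show False using fx bv by simp
      qed
      then show "x \<in> B" unfolding B_def by simp
    qed
    have "measure_pmf.prob (samples N k m) {xs. best_value f xs < c}
        = measure_pmf.prob (samples N k m) ({xs. best_value f xs < c} \<inter> set_pmf (samples N k m))"
      by (simp add: measure_Int_set_pmf)
    also have "\<dots> \<le> measure_pmf.prob (samples N k m) {xs. \<forall>x\<in>set xs. x \<in> B}"
      using sub by (intro measure_pmf.finite_measure_mono) auto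
    also have "\<dots> = measure (measure_pmf p) B ^ m"
      unfolding samples_def p_def K_def by (rule rep_all_measure)
    also have "\<dots> \<le> (1 - 1 / real n) ^ m"
      using pB3 by (intro power_mono) auto
    also have "\<dots> \<le> exp (- 1 / real n) ^ m"
    proof (intro power_mono)
      show "1 - 1 / real n \<le> exp (- 1 / real n)"
        using exp_ge_add_one_self[of "- 1 / real n"] by simp
      show "0 \<le> 1 - 1 / real n" using n1 by simp
    qed
    also have "\<dots> = exp (- real m / real n)"
      by (simp add: exp_of_nat_mult[symmetric])
    also have "\<dots> \<le> exp (- ln (real n))"
    proof -
      have "real n * ln (real n) \<le> real m" using assms(10) n_def by simp
      then have "ln (real n) \<le> real m / real n" using n1 by (simp add: field_simps)
      then show ?thesis by simp
    qed
    also have "\<dots> = 1 / real n" using n1 by (simp add: exp_minus inverse_eq_divide)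
    finally show ?thesis unfolding c_def n_def .
  qed
qed

end
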